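(* For integers $m,l\ge0$ let $B_{ml}=ML^{m+1}\hat L^{-l}+(-1)^{l+m}\hat L^{-l}L^mML$ and $\hat B_{ml}=L^m\hat L^{-l+1}\hat M+(-1)^{l+m}\hat L\hat M\hat L^{-l}L^m$. Then $$B_{ml}^*=-DB_{ml}D^{-1},\qquad \hat B_{ml}^*=-D\hat B_{ml}D^{-1}.$$
   Context: $D=d/dx$; pseudo-differential operators multiply via $D^i f=\sum_{r\ge0}\binom{i}{r}D^r(f)D^{i-r}$; for $A=\sum_if_iD^i$, $A^*=\sum_i(-D)^if_i$. Two-component BKP hierarchy: dressing operators $\Phi=1+\sum_{i\ge1}a_iD^{-i}$, $\hat\Phi=1+\sum_{i\ge1}b_iD^i$ depending on $t=(t_1,t_3,\dots)$, $\hat t=(\hat t_1,\hat t_3,\dots)$, $t_1=x$, with $\Phi^*=D\Phi^{-1}D^{-1}$, $\hat\Phi^*=D\hat\Phi^{-1}D^{-1}$; Lax operators $L=\Phi D\Phi^{-1}$, $\hat L=\hat\Phi D^{-1}\hat\Phi^{-1}$ (so $L^*=-DLD^{-1}$, $\hat L^*=-D\hat LD^{-1}$); Orlov–Schulman operators $M=\Phi\Gamma\Phi^{-1}$, $\hat M=\hat\Phi\hat\Gamma\hat\Phi^{-1}$ with $\Gamma=\sum_{k\ \mathrm{odd}}kt_kD^{k-1}$, $\hat\Gamma=x+\sum_{k\ \mathrm{odd}}k\hat t_kD^{-k-1}$. *)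

theory Defs
  imports Main
begin

text \<open>Operators live in an associative unital ring 'a; adj is the formal adjoint A \<mapsto> A^*,
  an additive, order-reversing involution. D, Di are D and D^{-1}; x is multiplication
  by x (so D x - x D = 1 and x^* = x).\<close>

definition anti_involution :: "('a::ring_1 \<Rightarrow> 'a) \<Rightarrow> bool" where
  "anti_involution adj \<longleftrightarrow>
     (\<forall>a b. adj (a + b) = adj a + adj b) \<and>
     (\<forall>a b. adj (a * b) = adj b * adj a) \<and>
     (\<forall>a. adj (adj a) = a) \<and> adj 1 = 1"

text \<open>Standing data of the two-component BKP hierarchy:
  Phi, Phii = Phi^{-1}; Phih, Phihi = hat Phi^{-1};
  T = sum over odd k>=3 of k t_k D^{k-1} (t_k independent of x, so T commutes with D,
  and T^* = T since k-1 is even), so Gamma = x + T;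
  Th = sum over odd k of k hat t_k D^{-k-1} (commutes with D, Th^* = Th), so hat Gamma = x + Th.\<close>

definition bkp2_data ::
  "('a::ring_1 \<Rightarrow> 'a) \<Rightarrow> 'a \<Rightarrow> 'a \<Rightarrow> 'a \<Rightarrow> 'a \<Rightarrow> 'a \<Rightarrow> 'a \<Rightarrow> 'a \<Rightarrow> 'a \<Rightarrow> 'a \<Rightarrow> bool" where
  "bkp2_data adj D Di x Phi Phii Phih Phihi T Th \<longleftrightarrow>
     anti_involution adj \<and>
     D * Di = 1 \<and> Di * D = 1 \<and> adj D = - D \<and>
     D * x - x * D = 1 \<and> adj x = x \<and>
     Phi * Phii = 1 \<and> Phii * Phi = 1 \<and> Phih * Phihi = 1 \<and> Phihi * Phih = 1 \<and>
     adj Phi = D * Phii * Di \<and> adj Phih = D * Phihi * Di \<and>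
     D * T = T * D \<and> adj T = T \<and> D * Th = Th * D \<and> adj Th = Th"

definition LaxL :: "'a::ring_1 \<Rightarrow> 'a \<Rightarrow> 'a \<Rightarrow> 'a" where
  "LaxL D Phi Phii = Phi * D * Phii"

definition LaxLh :: "'a::ring_1 \<Rightarrow> 'a \<Rightarrow> 'a \<Rightarrow> 'a" where
  "LaxLh Di Phih Phihi = Phih * Di * Phihi"

text \<open>Integer powers of hat L; hat L^{-1} = hat Phi D hat Phi^{-1}.\<close>
definition LaxLh_pow :: "'a::ring_1 \<Rightarrow> 'a \<Rightarrow> 'a \<Rightarrow> 'a \<Rightarrow> int \<Rightarrow> 'a" where
  "LaxLh_pow D Di Phih Phihi k =
     (if 0 \<le> k then (Phih * Di * Phihi) ^ nat k else (Phih * D * Phihi) ^ nat (- k))"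

definition OSM :: "'a::ring_1 \<Rightarrow> 'a \<Rightarrow> 'a \<Rightarrow> 'a \<Rightarrow> 'a" where
  "OSM x T Phi Phii = Phi * (x + T) * Phii"

definition OSMh :: "'a::ring_1 \<Rightarrow> 'a \<Rightarrow> 'a \<Rightarrow> 'a \<Rightarrow> 'a" where
  "OSMh x Th Phih Phihi = Phih * (x + Th) * Phihi"

end

theory Submission
  imports Defs
begin

lemma adj_basic:
  assumes "anti_involution adj"
  shows "adj (a+b) = adj a + adj b" "adj (a*b) = adj b * adj a" "adj 1 = 1"
    "adj 0 = 0" "adj (-a) = - adj a" "adj (a - b) = adj a - adj b"
proof -
  show h1: "adj (a+b) = adj a + adj b" for a b using assms unfolding anti_involution_def by blast
  show "adj (a*b) = adj b * adj a" using assms unfolding anti_involution_def by blast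
  show "adj 1 = 1" using assms unfolding anti_involution_def by blast
  have "adj (0+0) = adj 0 + adj 0" by (rule h1)
  then show z: "adj 0 = 0" by simp
  have n: "adj (-a) = - adj a" for a
  proof -
    have "adj (a + -a) = adj a + adj (-a)" by (rule h1)
    then have "adj a + adj (-a) = 0" using z by simp
    then show ?thesis by (metis add.inverse_unique)
  qed
  show "adj (-a) = - adj a" by (rule n)
  show "adj (a - b) = adj a - adj b" using h1[of a "-b"] n[of b] by simp
qed

lemma neg1_central: "(-1::'a::ring_1)^n * a = a * (-1)^n"
  by (cases "even n") auto

lemma adj_neg1: assumes "anti_involution adj" shows "adj ((-1::'a::ring_1)^n) = (-1)^n"
  using adj_basic[OF assms] by (cases "even n") auto

lemma adj_pow:
  assumes ai: "anti_involution adj" and DDi: "D*Di = (1::'a::ring_1)" and DiD: "Di*D = 1"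
    and aA: "adj A = - (D*A*Di)"
  shows "adj (A^n) = (-1)^n * (D * A^n * Di)"
proof (induction n)
  case 0 then show ?case using adj_basic[OF ai] DDi by simp
next
  case (Suc n)
  have "adj (A^Suc n) = adj (A^n * A)" by (simp only: power_Suc2)
  also have "... = adj A * adj (A^n)" using adj_basic[OF ai] by simp
  also have "... = - (D*A*Di) * ((-1)^n * (D * A^n * Di))" using aA Suc by simp
  also have "... = - ((-1)^n * (D*A*Di * (D * A^n * Di)))"
  proof -
    have h: "(D*A*Di) * ((-1)^n * Y) = (-1)^n*((D*A*Di)*Y)" for Y
      by (metis mult.assoc neg1_central)
    show ?thesis using h by (metis minus_mult_left mult.assoc)
  qed
  also have "D*A*Di * (D * A^n * Di) = D * (A * A^n) * Di"
    by (simp add: mult.assoc DiD mult.assoc[of Di D, symmetric])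
  finally show ?case by simp
qed

lemma C3: assumes "Di*D = (1::'a::ring_1)"
  shows "(D*a*Di)*(D*b*Di)*(D*c*Di) = D*(a*b*c)*Di"
  by (simp add: mult.assoc assms mult.assoc[of Di D, symmetric])

lemma C4: assumes "Di*D = (1::'a::ring_1)"
  shows "(D*a*Di)*(D*b*Di)*(D*c*Di)*(D*d*Di) = D*(a*b*c*d)*Di"
  by (simp add: mult.assoc assms mult.assoc[of Di D, symmetric])

lemma signB:
  fixes a b c d g e f :: "'a::ring_1"
  assumes "e = 1 \<or> e = -1" "f = 1 \<or> f = -1"
  shows "(e*a) * ((-f)*b) * c + (-d)*c*(f*g)*(e*a)*(e*f) = -((e*f)*(a*b*c)) - d*c*g*a"
  using assms by (elim disjE) (simp_all add: algebra_simps)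

lemma signBh:
  fixes c q g p h e f :: "'a::ring_1"
  assumes "e = 1 \<or> e = -1" "f = 1 \<or> f = -1"
  shows "c*(-(e*q))*(f*g) + (f*g)*(e*p)*c*(-h)*(e*f) = -((e*f)*(c*q*g)) - g*p*c*h"
  using assms by (elim disjE) (simp_all add: algebra_simps)

theorem proposition3p9:
  fixes adj :: "'a::ring_1 \<Rightarrow> 'a"
    and D Di x Phi Phii Phih Phihi T Th :: 'a
    and m l :: nat
  assumes "bkp2_data adj D Di x Phi Phii Phih Phihi T Th"
  defines "L \<equiv> LaxL D Phi Phii"
    and "Lh \<equiv> LaxLh Di Phih Phihi"
    and "Lhp \<equiv> LaxLh_pow D Di Phih Phihi"
    and "M \<equiv> OSM x T Phi Phii"
    and "Mh \<equiv> OSMh x Th Phih Phihi"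
  defines "B \<equiv> M * L ^ (m + 1) * Lhp (- int l)
               + (- 1) ^ (l + m) * Lhp (- int l) * L ^ m * M * L"
    and "Bh \<equiv> L ^ m * Lhp (1 - int l) * Mh
               + (- 1) ^ (l + m) * Lh * Mh * Lhp (- int l) * L ^ m"
  shows "adj B = - (D * B * Di) \<and> adj Bh = - (D * Bh * Di)"
proof -
  from assms(1) have ai: "anti_involution adj" and DDi: "D*Di=1" and DiD: "Di*D=1"
    and aD: "adj D = -D" and Dx: "D*x - x*D = 1" and ax: "adj x = x"
    and P1: "Phi*Phii=1" and P2: "Phii*Phi=1" and P3: "Phih*Phihi=1" and P4: "Phihi*Phih=1"
    and aPhi: "adj Phi = D*Phii*Di" and aPhih: "adj Phih = D*Phihi*Di"
    and DT: "D*T = T*D" and aT: "adj T = T" and DTh: "D*Th = Th*D" and aTh: "adj Th = Th"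
    unfolding bkp2_data_def by auto
  note A = adj_basic[OF ai]
  have DiD': "Di*(D*z) = z" for z using DiD by (metis mult.assoc mult_1_left)
  have DDi': "D*(Di*z) = z" for z using DDi by (metis mult.assoc mult_1_left)
  have P1': "Phi*(Phii*z) = z" for z using P1 by (metis mult.assoc mult_1_left)
  have P2': "Phii*(Phi*z) = z" for z using P2 by (metis mult.assoc mult_1_left)
  have P3': "Phih*(Phihi*z) = z" for z using P3 by (metis mult.assoc mult_1_left)
  have P4': "Phihi*(Phih*z) = z" for z using P4 by (metis mult.assoc mult_1_left)
  note canc = DDi DiD P1 P2 P3 P4 DiD' DDi' P1' P2' P3' P4'
  have aDi: "adj Di = - Di"
  proof -
    have "adj Di * adj D = 1" using A(2)[of D Di] A(3) DDi by simp
    hence "adj Di * D = -1" using aD by (simp add: minus_equation_iff)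
    hence "adj Di * D * Di = - Di" by simp
    thus ?thesis using DDi by (simp add: mult.assoc)
  qed
  have aPhii: "adj Phii = D*Phi*Di"
  proof -
    have "adj Phii * adj Phi = 1" using A(2)[of Phi Phii] A(3) P1 by simp
    hence "adj Phii * (D*Phii*Di) * (D*Phi*Di) = D*Phi*Di" using aPhi by simp
    thus ?thesis by (simp add: mult.assoc canc)
  qed
  have aPhihi: "adj Phihi = D*Phih*Di"
  proof -
    have "adj Phihi * adj Phih = 1" using A(2)[of Phih Phihi] A(3) P3 by simp
    hence "adj Phihi * (D*Phihi*Di) * (D*Phih*Di) = D*Phih*Di" using aPhih by simp
    thus ?thesis by (simp add: mult.assoc canc)
  qed
  define Li where "Li = Phi*Di*Phii"
  define Lhi where "Lhi = Phih*D*Phihi"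
  define P where "P = Lhi^l"
  define Q where "Q = Lh*P"
  have LhP: "P*Lh = Lh*P"
  proof (cases l)
    case 0 then show ?thesis by (simp add: P_def)
  next
    case (Suc k)
    have "Lhi*Lh = 1" "Lh*Lhi = 1" unfolding Lhi_def Lh_def LaxLh_def by (simp_all add: mult.assoc canc)
    then show ?thesis unfolding P_def Suc
      by (metis power_Suc power_Suc2 mult.assoc mult_1_left mult_1_right)
  qed
  have LhLhi: "Lh*Lhi = 1" unfolding Lhi_def Lh_def LaxLh_def by (simp add: mult.assoc canc)
  have Pdef: "Lhp (- int l) = P"
    unfolding Lhp_def LaxLh_pow_def P_def Lhi_def by auto
  have Qdef: "Lhp (1 - int l) = Q"
  proof (cases l)
    case 0 then show ?thesis unfolding Lhp_def LaxLh_pow_def Q_def P_def Lh_def LaxLh_def by simp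
  next
    case (Suc k)
    have "1 - int l = - int k" using Suc by simp
    moreover have "Lhp (- int k) = Lhi^k"
      unfolding Lhp_def LaxLh_pow_def Lhi_def by auto
    ultimately have "Lhp (1 - int l) = Lhi^k" by simp
    also have "... = Lh*P" unfolding P_def Suc by (simp add: mult.assoc[symmetric] LhLhi)
    finally show ?thesis by (simp add: Q_def)
  qed
  have aL: "adj L = - (D*L*Di)"
    unfolding L_def LaxL_def using A aPhi aPhii aD by (simp add: mult.assoc canc)
  have aLh: "adj Lh = - (D*Lh*Di)"
    unfolding Lh_def LaxLh_def using A aPhih aPhihi aDi by (simp add: mult.assoc canc)
  have aLhi: "adj Lhi = - (D*Lhi*Di)"
    unfolding Lhi_def using A aPhih aPhihi aD by (simp add: mult.assoc canc)
  have Dx': "D*(x*z) = x*(D*z) + z" for z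
  proof -
    have "D*x = x*D + 1" using Dx by (simp add: algebra_simps)
    then show ?thesis by (metis mult.assoc distrib_right mult_1_left)
  qed
  have DT': "D*(T*z) = T*(D*z)" for z by (metis DT mult.assoc)
  have DTh': "D*(Th*z) = Th*(D*z)" for z by (metis DTh mult.assoc)
  have Dix: "Di*(x*(D*z)) = x*z - Di*z" for z
  proof -
    have "Di*(D*(x*z)) = Di*(x*(D*z)) + Di*z" using Dx' by (simp add: distrib_left)
    then show ?thesis using DiD' by (simp add: algebra_simps)
  qed
  have DiT: "Di*(T*(D*z)) = T*z" for z by (metis DT' DiD')
  have DiTh: "Di*(Th*(D*z)) = Th*z" for z by (metis DTh' DiD')
  have Dix2: "Di*(x*z) = x*(Di*z) - Di*(Di*z)" for z
    using Dix[of "Di*z"] by (simp add: DDi')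
  have DiTh2: "Di*(Th*z) = Th*(Di*z)" for z using DiTh[of "Di*z"] by (simp add: DDi')
  have aM: "adj M = D*(M - Li)*Di"
    unfolding M_def OSM_def Li_def using A aPhi aPhii ax aT
    by (simp add: algebra_simps canc Dix DiT)
  have aMh: "adj Mh = D*(Mh - Lh)*Di"
    unfolding Mh_def OSMh_def Lh_def LaxLh_def using A aPhih aPhihi ax aTh
    by (simp add: algebra_simps canc Dix DiTh)
  have LM: "L*M = M*L + 1"
    unfolding L_def LaxL_def M_def OSM_def
    by (simp add: algebra_simps canc Dx' DT')
  have LLi: "L*Li = 1" unfolding L_def LaxL_def Li_def by (simp add: mult.assoc canc)
  have LhMh: "Lh*Mh = Mh*Lh - Lh*Lh"
    unfolding Lh_def LaxLh_def Mh_def OSMh_def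
    by (simp add: algebra_simps canc Dix2 DiTh2)
  have aP: "adj P = (-1)^l * (D*P*Di)" unfolding P_def by (rule adj_pow[OF ai DDi DiD aLhi])
  have aLp: "adj (L^n) = (-1)^n * (D*L^n*Di)" for n by (rule adj_pow[OF ai DDi DiD aL])
  have aQ: "adj Q = - ((-1)^l * (D*Q*Di))"
  proof -
    have "adj Q = adj P * adj Lh" unfolding Q_def using A by simp
    also have "... = - ((-1)^l * ((D*P*Di)*(D*Lh*Di)))" using aP aLh by (simp add: mult.assoc)
    also have "(D*P*Di)*(D*Lh*Di) = D*Q*Di"
      unfolding Q_def LhP[symmetric] by (simp add: mult.assoc canc)
    finally show ?thesis .
  qed
  have e: "(-1::'a)^l = 1 \<or> (-1::'a)^l = -1" by (cases "even l") auto
  have f: "(-1::'a)^m = 1 \<or> (-1::'a)^m = -1" by (cases "even m") auto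
  have sgn: "(-1::'a)^(l+m) = (-1)^l * (-1)^m" by (simp add: power_add)
  have sgn1: "(-1::'a)^(m+1) = - ((-1)^m)" by simp
  have cen: "D*((-1::'a)^n*y)*Di = (-1)^n*(D*y*Di)" for n y
    by (metis mult.assoc neg1_central)
  have I1: "P*L^(m+1)*(M-Li) = P*L^m*M*L"
  proof -
    have Lm1: "L^(m+1) = L^m*L" by (simp only: Suc_eq_plus1[symmetric] power_Suc2)
    have "P*L^(m+1)*(M-Li) = P*L^m*(L*M) - P*L^m*(L*Li)"
      unfolding Lm1 by (simp add: algebra_simps)
    also have "... = P*L^m*M*L" using LM LLi by (simp add: algebra_simps)
    finally show ?thesis .
  qed
  have I2: "L*(M-Li)*L^m*P = M*L^(m+1)*P"
  proof -
    have "L*(M-Li)*L^m*P = (L*M)*L^m*P - (L*Li)*L^m*P" by (simp add: algebra_simps)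
    also have "... = M*L^(m+1)*P" using LM LLi by (simp add: algebra_simps power_Suc)
    finally show ?thesis .
  qed
  have partB: "adj B = - (D * B * Di)"
  proof -
    have "adj B = adj P * adj (L^(m+1)) * adj M
        + adj L * adj M * adj (L^m) * adj P * adj ((-1)^(l+m))"
      unfolding B_def Pdef using A by (simp add: mult.assoc)
    also have "... = ((-1)^l*(D*P*Di)) * ((-((-1)^m))*(D*L^(m+1)*Di)) * (D*(M-Li)*Di)
        + (-(D*L*Di)) * (D*(M-Li)*Di) * ((-1)^m*(D*L^m*Di)) * ((-1)^l*(D*P*Di)) * ((-1)^l*(-1)^m)"
      using aP aLp[of "m+1"] aLp[of m] aM aL adj_neg1[OF ai, of "l+m"] sgn sgn1 by simp
    also have "... = -(((-1)^l*(-1)^m)*((D*P*Di)*(D*L^(m+1)*Di)*(D*(M-Li)*Di)))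
        - (D*L*Di)*(D*(M-Li)*Di)*(D*L^m*Di)*(D*P*Di)"
      by (rule signB[OF e f])
    also have "... = - ((-1)^(l+m) * (D*(P*L^m*M*L)*Di)) - D*(M*L^(m+1)*P)*Di"
      using C3[OF DiD] C4[OF DiD] I1 I2 sgn by simp
    also have "... = - (D * B * Di)"
      unfolding B_def Pdef using cen[of "l+m" "P*L^m*M*L"]
      by (simp add: algebra_simps)
    finally show ?thesis .
  qed
  have J1: "(Mh-Lh)*Q*L^m = Lh*Mh*P*L^m"
  proof -
    have "(Mh-Lh)*Q*L^m = (Mh*Lh - Lh*Lh)*P*L^m" unfolding Q_def by (simp add: algebra_simps)
    also have "... = Lh*Mh*P*L^m" using LhMh by simp
    finally show ?thesis .
  qed
  have J2: "L^m*P*(Mh-Lh)*Lh = L^m*Q*Mh"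
  proof -
    have "L^m*P*(Mh-Lh)*Lh = L^m*P*(Mh*Lh - Lh*Lh)" by (simp add: algebra_simps)
    also have "... = L^m*P*(Lh*Mh)" using LhMh by simp
    also have "... = L^m*(P*Lh)*Mh" by (simp add: mult.assoc)
    finally show ?thesis using LhP Q_def by simp
  qed
  have partBh: "adj Bh = - (D * Bh * Di)"
  proof -
    have "adj Bh = adj Mh * adj Q * adj (L^m)
        + adj (L^m) * adj P * adj Mh * adj Lh * adj ((-1)^(l+m))"
      unfolding Bh_def Pdef Qdef using A by (simp add: mult.assoc)
    also have "... = (D*(Mh-Lh)*Di) * (-((-1)^l*(D*Q*Di))) * ((-1)^m*(D*L^m*Di))
        + ((-1)^m*(D*L^m*Di)) * ((-1)^l*(D*P*Di)) * (D*(Mh-Lh)*Di) * (-(D*Lh*Di)) * ((-1)^l*(-1)^m)"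
      using aP aLp[of m] aMh aLh aQ adj_neg1[OF ai, of "l+m"] sgn by simp
    also have "... = -(((-1)^l*(-1)^m)*((D*(Mh-Lh)*Di)*(D*Q*Di)*(D*L^m*Di)))
        - (D*L^m*Di)*(D*P*Di)*(D*(Mh-Lh)*Di)*(D*Lh*Di)"
      by (rule signBh[OF e f])
    also have "... = - ((-1)^(l+m) * (D*(Lh*Mh*P*L^m)*Di)) - D*(L^m*Q*Mh)*Di"
      using C3[OF DiD] C4[OF DiD] J1 J2 sgn by simp
    also have "... = - (D * Bh * Di)"
      unfolding Bh_def Pdef Qdef using cen[of "l+m" "Lh*Mh*P*L^m"]
      by (simp add: algebra_simps)
    finally show ?thesis .
  qed
  show ?thesis using partB partBh by simp
qed

end
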